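(* For all $c>0$ and $b\ge\max\{c,2\}$, the function $g(x)=\frac{x+b}{x+c}$ on $[0,\infty)$ satisfies $x^2g''(x)-g(\alpha)\,g(x/\alpha)\le0$ for all $x\ge0$ and $\alpha>0$; i.e. $g\in\mathcal{T}^{+}$.
   Context: $\mathcal{T}^{+}$ is the set of functions $g:[0,\infty)\to[0,\infty)$ with $x^2g''(x)-g(\alpha)g(x/\alpha)\le0$ for all $x\ge0$, $\alpha>0$. *)

theory Defs
  imports "HOL-Analysis.Analysis"
begin

text \<open>The class T-plus: functions g from [0,oo) to [0,oo) with
  x^2 g''(x) - g(alpha) g(x/alpha) <= 0 for all x >= 0 and alpha > 0.
  Functions are modelled as real => real; only values on [0,oo) matter,
  and g'' is the (iterated) derivative deriv (deriv g).\<close>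
definition Tplus :: "(real \<Rightarrow> real) set" where
  "Tplus = {g. (\<forall>x\<ge>0. g x \<ge> 0) \<and>
     (\<forall>x\<ge>0. \<forall>\<alpha>>0. x\<^sup>2 * deriv (deriv g) x - g \<alpha> * g (x / \<alpha>) \<le> 0)}"

end

theory Submission
  imports Defs
begin

lemma d1:
  fixes b c y :: real
  assumes "y + c > 0"
  shows "((\<lambda>x. (x + b) / (x + c)) has_real_derivative (c - b) / (y + c)^2) (at y)"
proof -
  have "((\<lambda>x. (x + b) / (x + c)) has_real_derivative ((1 * (y + c) - (y + b) * 1) / ((y + c) * (y + c)))) (at y)"
    using assms by (intro derivative_eq_intros) auto
  moreover have "(1 * (y + c) - (y + b) * 1) / ((y + c) * (y + c)) = (c - b) / (y + c)^2"
    by (simp add: power2_eq_square)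
  ultimately show ?thesis by metis
qed

lemma d2:
  fixes b c x :: real
  assumes "x + c > 0"
  shows "deriv (deriv (\<lambda>x. (x + b) / (x + c))) x = 2 * (b - c) / (x + c)^3"
proof -
  have h: "((\<lambda>y. (c - b) / (y + c)^2) has_real_derivative 2 * (b - c) / (x + c)^3) (at x)"
  proof -
    have "((\<lambda>y. (c - b) / (y + c)^2) has_real_derivative
       (- ((c - b) * (of_nat 2 * (x + c) ^ (2 - 1) * (1 + 0))) / ((x + c)^2 * (x + c)^2))) (at x)"
      using assms by (intro derivative_eq_intros) auto
    moreover have "- ((c - b) * (of_nat 2 * (x + c) ^ (2 - 1) * (1 + 0))) / ((x + c)^2 * (x + c)^2)
        = 2 * (b - c) / (x + c)^3"
    proof -
      have ne: "x + c \<noteq> 0" using assms by simp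
      have "- ((c - b) * (of_nat 2 * (x + c) ^ (2 - 1) * (1 + 0))) / ((x + c)^2 * (x + c)^2)
          = (2 * (b - c) * (x + c)) / ((x + c)^3 * (x + c))"
        by (simp add: power2_eq_square power3_eq_cube algebra_simps)
      also have "\<dots> = 2 * (b - c) / (x + c)^3" using ne by simp
      finally show ?thesis .
    qed
    ultimately show ?thesis by metis
  qed
  have "(deriv (\<lambda>x. (x + b) / (x + c)) has_real_derivative 2 * (b - c) / (x + c)^3) (at x)"
    apply (rule has_field_derivative_transform_within_open[OF h, of "{-c<..}"])
    using assms by (auto intro!: DERIV_imp_deriv[symmetric] d1)
  then show ?thesis by (rule DERIV_imp_deriv)
qed

lemma key:
  fixes b c x s :: real
  assumes "c > 0" "b \<ge> c" "b \<ge> 2" "x \<ge> 0" "s \<ge> 0"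
  shows "2 * (b - c) * x^2 * (x + c * s + c^2) \<le> (x + c)^3 * (x + b * s + b^2)"
proof -
  have A: "2 * (b - c) * x^2 * (x + c^2) \<le> (x + c)^3 * (x + b^2)"
  proof -
    have "2 * (b - c) * x^2 * (x + c^2) \<le> 2 * b * x^3 + 2 * b * c^2 * x^2"
      using assms by (simp add: algebra_simps power2_eq_square power3_eq_cube mult_nonneg_nonneg)
    also have "\<dots> \<le> b^2 * x^3 + 3 * c * b^2 * x^2"
    proof -
      have "2 * b * x^3 \<le> b^2 * x^3" using assms
        by (intro mult_right_mono) (auto simp: power2_eq_square)
      moreover have "2 * b * c^2 * x^2 \<le> 3 * c * b^2 * x^2"
      proof (intro mult_right_mono)
        have "2 * b * c^2 = 2 * (b * c) * c" by (simp add: power2_eq_square)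
        also have "\<dots> \<le> 3 * (b * c) * b" using assms by (intro mult_mono) auto
        finally show "2 * b * c^2 \<le> 3 * c * b^2" by (simp add: power2_eq_square algebra_simps)
      qed simp
      ultimately show ?thesis by simp
    qed
    also have "\<dots> \<le> (x + c)^3 * (x + b^2)"
    proof -
      have "(x + c)^3 * (x + b^2) - (b^2 * x^3 + 3 * c * b^2 * x^2) =
        x^4 + 3*c*x^3 + 3*c^2*x^2 + c^3*x + 3*c^2*b^2*x + c^3*b^2"
        by (simp add: algebra_simps power2_eq_square power3_eq_cube power4_eq_xxxx)
      also have "\<dots> \<ge> 0" using assms by (intro add_nonneg_nonneg mult_nonneg_nonneg) auto
      finally show ?thesis by simp
    qed
    finally show ?thesis .
  qed
  have B: "2 * (b - c) * x^2 * c \<le> (x + c)^3 * b"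
  proof -
    have "2 * (b - c) * x^2 * c \<le> 3 * b * x^2 * c" using assms by (intro mult_right_mono) auto
    also have "\<dots> \<le> (x + c)^3 * b"
    proof -
      have "(x + c)^3 - 3 * x^2 * c = x^3 + 3*x*c^2 + c^3"
        by (simp add: algebra_simps power2_eq_square power3_eq_cube)
      also have "\<dots> \<ge> 0" using assms by (intro add_nonneg_nonneg mult_nonneg_nonneg) auto
      finally have "3 * x^2 * c \<le> (x + c)^3" by simp
      then have "b * (3 * x^2 * c) \<le> b * (x + c)^3" using assms by (intro mult_left_mono) auto
      then show ?thesis by (simp add: algebra_simps)
    qed
    finally show ?thesis .
  qed
  have "2 * (b - c) * x^2 * (x + c * s + c^2) = 2 * (b - c) * x^2 * (x + c^2) + (2 * (b - c) * x^2 * c) * s"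
    by (simp add: algebra_simps)
  also have "\<dots> \<le> (x + c)^3 * (x + b^2) + ((x + c)^3 * b) * s"
    using A B assms by (intro add_mono mult_right_mono) auto
  also have "\<dots> = (x + c)^3 * (x + b * s + b^2)" by (simp add: algebra_simps)
  finally show ?thesis .
qed

theorem lemma11:
  fixes b c :: real
  assumes "c > 0" and "b \<ge> max c 2"
  shows "(\<lambda>x. (x + b) / (x + c)) \<in> Tplus"
  unfolding Tplus_def
proof (intro CollectI conjI allI impI)
  fix x :: real assume "x \<ge> 0"
  then show "(x + b) / (x + c) \<ge> 0" using assms by auto
next
  fix x a :: real assume x: "x \<ge> 0" and a: "a > 0"
  have bc: "b \<ge> c" "b \<ge> 2" using assms by auto
  define s where "s = a + x / a"
  have s0: "s \<ge> 0" using x a by (simp add: s_def)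
  have xc: "x + c > 0" using x assms by simp
  have dd: "deriv (deriv (\<lambda>x. (x + b) / (x + c))) x = 2 * (b - c) / (x + c)^3"
    using d2 xc by blast
  have prod: "(a + b) / (a + c) * ((x / a + b) / (x / a + c)) = (x + b * s + b^2) / (x + c * s + c^2)"
  proof -
    have "(a + b) * (x / a + b) = x + b * s + b^2" using a
      by (simp add: s_def field_simps power2_eq_square)
    moreover have "(a + c) * (x / a + c) = x + c * s + c^2" using a
      by (simp add: s_def field_simps power2_eq_square)
    ultimately show ?thesis by (simp add: field_simps)
  qed
  have den: "x + c * s + c^2 > 0" using assms x s0 by (simp add: add_nonneg_pos)
  have "x^2 * (2 * (b - c) / (x + c)^3) \<le> (x + b * s + b^2) / (x + c * s + c^2)"
    using key[OF assms(1) bc x s0] den xc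
    by (simp add: divide_simps mult.commute mult.left_commute)
  then show "x\<^sup>2 * deriv (deriv (\<lambda>x. (x + b) / (x + c))) x -
        (a + b) / (a + c) * ((x / a + b) / (x / a + c)) \<le> 0"
    using dd prod by simp
qed

end
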